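(* Let $\mathcal{X}=\{1,\dots,n\}$ and $\pi$ a probability mass function on $\mathcal{X}$ with full support, ordered so that $\pi(1)\le\pi(2)\le\dots\le\pi(n)$. Fix $k\in\{1,\dots,n\}$ and let $(\mathcal{O}_i)_{i=1}^k$ be the partition with $\mathcal{O}_i=\{i\}$ for $1\le i\le k-1$ and $\mathcal{O}_k=\{k,k+1,\dots,n\}$. Then the Gibbs kernel $G_{\mathcal{O}}$ of $(\mathcal{O}_i)_{i=1}^k$ minimises $D^\pi_{KL}(G\|\Pi)$ among all Gibbs kernels with $k$ orbits: for any partition $(\mathcal{C}_i)_{i=1}^k$ of $\mathcal{X}$ into $k$ blocks, $D^\pi_{KL}(G_{\mathcal{O}}\|\Pi)\le D^\pi_{KL}(G_{\mathcal{C}}\|\Pi)$.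
   Context: For a partition $(\mathcal{C}_i)$ of $\mathcal{X}$ (the orbits of some group action), its Gibbs kernel is $G_{\mathcal{C}}(x,y)=\pi(y)/\pi(\mathcal{C}(x))$ if $y$ lies in the block $\mathcal{C}(x)$ containing $x$, and $0$ otherwise, where $\pi(A)=\sum_{z\in A}\pi(z)$. $\Pi$ is the matrix with all rows equal to $\pi$, and $D^\pi_{KL}(P\|Q)=\sum_{x,y}\pi(x)P(x,y)\log\frac{P(x,y)}{Q(x,y)}$ with $0\log(0/a)=0$. *)

theory Defs
  imports "HOL-Analysis.Analysis" "HOL-Library.Disjoint_Sets"
begin

definition pmass :: "(nat \<Rightarrow> real) \<Rightarrow> nat set \<Rightarrow> real" where
  "pmass \<pi> A = (\<Sum>z\<in>A. \<pi> z)"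

definition block_of :: "nat set set \<Rightarrow> nat \<Rightarrow> nat set" where
  "block_of P x = (THE C. C \<in> P \<and> x \<in> C)"

definition gibbs_kernel :: "(nat \<Rightarrow> real) \<Rightarrow> nat set set \<Rightarrow> nat \<Rightarrow> nat \<Rightarrow> real" where
  "gibbs_kernel \<pi> P x y =
     (if y \<in> block_of P x then \<pi> y / pmass \<pi> (block_of P x) else 0)"

definition Pi_mat :: "(nat \<Rightarrow> real) \<Rightarrow> nat \<Rightarrow> nat \<Rightarrow> real" where
  "Pi_mat \<pi> x y = \<pi> y"

definition KL_pi :: "nat set \<Rightarrow> (nat \<Rightarrow> real) \<Rightarrow> (nat \<Rightarrow> nat \<Rightarrow> real)
                       \<Rightarrow> (nat \<Rightarrow> nat \<Rightarrow> real) \<Rightarrow> real" where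
  "KL_pi X \<pi> P Q = (\<Sum>x\<in>X. \<Sum>y\<in>X.
      (if P x y = 0 then 0 else \<pi> x * P x y * ln (P x y / Q x y)))"

definition opt_partition :: "nat \<Rightarrow> nat \<Rightarrow> nat set set" where
  "opt_partition n k = (\<lambda>i. {i}) ` {1..<k} \<union> {{k..n}}"

end

theory Submission
  imports Defs
begin

lemma part_facts:
  assumes "partition_on S C" "B \<in> C"
  shows "B \<subseteq> S" "B \<noteq> {}" "\<And>D. D \<in> C \<Longrightarrow> D \<noteq> B \<Longrightarrow> B \<inter> D = {}"
  using assms by (auto simp: partition_on_def pairwise_def disjnt_def)

lemma block_of_eq:
  assumes "partition_on S C" "B \<in> C" "x \<in> B"
  shows "block_of C x = B"
  unfolding block_of_def
proof (rule the_equality)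
  show "B \<in> C \<and> x \<in> B" using assms by auto
  fix D assume "D \<in> C \<and> x \<in> D"
  then show "D = B" using part_facts(3)[OF assms(1,2)] assms by blast
qed

lemma pmass_pos:
  assumes "\<forall>x\<in>S. \<pi> x > 0" "finite S" "partition_on S C" "B \<in> C"
  shows "pmass \<pi> B > 0"
proof -
  have "B \<subseteq> S" "B \<noteq> {}" using part_facts[OF assms(3,4)] by auto
  moreover have "finite B" using \<open>B \<subseteq> S\<close> assms(2) finite_subset by blast
  ultimately show ?thesis unfolding pmass_def using assms(1)
    by (intro sum_pos) auto
qed

lemma KL_gibbs:
  assumes pos: "\<forall>x\<in>{1..n}. \<pi> x > 0" and part: "partition_on {1..n} C"
  shows "KL_pi {1..n} \<pi> (gibbs_kernel \<pi> C) (Pi_mat \<pi>)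
       = - (\<Sum>B\<in>C. pmass \<pi> B * ln (pmass \<pi> B))"
proof -
  have finC: "finite C" using finite_elements[OF _ part] by simp
  have inner: "(\<Sum>y\<in>{1..n}. (if gibbs_kernel \<pi> C x y = 0 then 0 else
        \<pi> x * gibbs_kernel \<pi> C x y * ln (gibbs_kernel \<pi> C x y / Pi_mat \<pi> x y)))
      = - (\<pi> x * ln (pmass \<pi> B))" if B: "B \<in> C" "x \<in> B" for x B
  proof -
    have bo: "block_of C x = B" using block_of_eq[OF part B] .
    have m: "pmass \<pi> B > 0" using pmass_pos[OF pos _ part B(1)] by simp
    have BS: "B \<subseteq> {1..n}" using part_facts[OF part B(1)] by auto
    have "(\<Sum>y\<in>{1..n}. (if gibbs_kernel \<pi> C x y = 0 then 0 else
        \<pi> x * gibbs_kernel \<pi> C x y * ln (gibbs_kernel \<pi> C x y / Pi_mat \<pi> x y)))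
       = (\<Sum>y\<in>{1..n}. if y \<in> B then - (\<pi> x * \<pi> y / pmass \<pi> B * ln (pmass \<pi> B)) else 0)"
    proof (rule sum.cong[OF refl])
      fix y assume y: "y \<in> {1..n}"
      show "(if gibbs_kernel \<pi> C x y = 0 then 0 else
        \<pi> x * gibbs_kernel \<pi> C x y * ln (gibbs_kernel \<pi> C x y / Pi_mat \<pi> x y))
        = (if y \<in> B then - (\<pi> x * \<pi> y / pmass \<pi> B * ln (pmass \<pi> B)) else 0)"
      proof (cases "y \<in> B")
        case True
        have py: "\<pi> y > 0" using pos y by auto
        have "ln (\<pi> y / pmass \<pi> B / \<pi> y) = - ln (pmass \<pi> B)"
          using py m by (simp add: ln_div)
        then show ?thesis using True py m
          by (simp add: gibbs_kernel_def bo Pi_mat_def)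
      next
        case False
        then show ?thesis by (simp add: gibbs_kernel_def bo)
      qed
    qed
    also have "\<dots> = (\<Sum>y\<in>B. - (\<pi> x * \<pi> y / pmass \<pi> B * ln (pmass \<pi> B)))"
      using BS by (simp add: sum.inter_restrict[symmetric] Int_absorb1 inf.absorb2)
    also have "\<dots> = - (\<pi> x * ln (pmass \<pi> B) * (\<Sum>y\<in>B. \<pi> y) / pmass \<pi> B)"
      by (simp add: sum_negf sum_divide_distrib[symmetric] sum_distrib_right[symmetric] mult.commute mult.left_commute)
    also have "\<dots> = - (\<pi> x * ln (pmass \<pi> B))"
      using m by (simp add: pmass_def)
    finally show ?thesis .
  qed
  have U: "{1..n} = \<Union>C" using partition_onD1[OF part] .
  have sumU: "sum F {1..n} = (\<Sum>B\<in>C. sum F B)" for F :: "nat \<Rightarrow> real"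
    unfolding U
    apply (subst sum.Union_disjoint)
    using part_facts[OF part] finite_subset[of _ "{1..n}"] U by auto
  have "KL_pi {1..n} \<pi> (gibbs_kernel \<pi> C) (Pi_mat \<pi>)
      = (\<Sum>B\<in>C. \<Sum>x\<in>B. (\<Sum>y\<in>{1..n}. (if gibbs_kernel \<pi> C x y = 0 then 0 else
        \<pi> x * gibbs_kernel \<pi> C x y * ln (gibbs_kernel \<pi> C x y / Pi_mat \<pi> x y))))"
    unfolding KL_pi_def by (rule sumU)
  also have "\<dots> = (\<Sum>B\<in>C. \<Sum>x\<in>B. - (\<pi> x * ln (pmass \<pi> B)))"
    using inner by (intro sum.cong refl) auto
  also have "\<dots> = - (\<Sum>B\<in>C. pmass \<pi> B * ln (pmass \<pi> B))"
    by (simp add: sum_negf pmass_def sum_distrib_right)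
  finally show ?thesis .
qed


definition xlx :: "real \<Rightarrow> real" where "xlx x = x * ln x"

lemma xlx_convex: "convex_on {0<..} xlx"
proof (rule f''_ge0_imp_convex[where f' = "\<lambda>x. ln x + 1" and f'' = "\<lambda>x. 1 / x"])
  show "convex ({0<..} :: real set)" by simp
  fix x :: real assume x: "x \<in> {0<..}"
  show "(xlx has_real_derivative ln x + 1) (at x)"
    unfolding xlx_def using x by (auto intro!: derivative_eq_intros)
  show "((\<lambda>x. ln x + 1) has_real_derivative 1 / x) (at x)"
    using x by (auto intro!: derivative_eq_intros)
  show "0 \<le> 1 / x" using x by simp
qed

lemma xlx_exch:
  assumes "0 < a" "a \<le> b" "a \<le> c" "a + d = b + c"
  shows "xlx b + xlx c \<le> xlx a + xlx d"
proof (cases "a = b")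
  case True
  then have "d = c" using assms by simp
  then show ?thesis using True by simp
next
  case False
  then have ad: "a < d" using assms by simp
  define t where "t = (b - a) / (d - a)"
  have t: "0 \<le> t" "t \<le> 1" using assms ad by (auto simp: t_def field_simps)
  have e: "t * (d - a) = b - a" using ad by (simp add: t_def)
  have b: "b = (1 - t) *\<^sub>R a + t *\<^sub>R d" using e by (simp add: algebra_simps)
  have c: "c = (1 - (1 - t)) *\<^sub>R a + (1 - t) *\<^sub>R d" using e assms by (simp add: algebra_simps)
  have A: "a \<in> {0<..}" "d \<in> {0<..}" using assms ad by auto
  have 1: "xlx b \<le> (1 - t) * xlx a + t * xlx d"
    unfolding b by (rule convex_onD[OF xlx_convex t A])
  have 2: "xlx c \<le> (1 - (1 - t)) * xlx a + (1 - t) * xlx d"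
    unfolding c by (rule convex_onD[OF xlx_convex _ _ A]) (use t in auto)
  show ?thesis using 1 2 by (simp add: algebra_simps)
qed


lemma pmass_union: "finite A \<Longrightarrow> finite B \<Longrightarrow> A \<inter> B = {} \<Longrightarrow> pmass \<pi> (A \<union> B) = pmass \<pi> A + pmass \<pi> B"
  unfolding pmass_def by (rule sum.union_disjoint)

lemma main_ineq:
  assumes pos: "\<forall>x\<in>{1..n}. \<pi> x > 0"
    and ord: "\<forall>i j. 1 \<le> i \<and> i \<le> j \<and> j \<le> n \<longrightarrow> \<pi> i \<le> \<pi> j"
  shows "1 \<le> j \<Longrightarrow> 1 \<le> k \<Longrightarrow> j + k - 1 \<le> n \<Longrightarrow> partition_on {j..n} C \<Longrightarrow> card C = k \<Longrightarrow>
    (\<Sum>B\<in>C. xlx (pmass \<pi> B)) \<le> (\<Sum>i\<in>{j..<j+k-1}. xlx (\<pi> i)) + xlx (pmass \<pi> {j+k-1..n})"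
proof (induction k arbitrary: j C)
  case 0
  then show ?case by simp
next
  case (Suc k')
  note part = Suc.prems(4)
  have finC: "finite C" using finite_elements[OF _ part] by simp
  have sub: "B \<subseteq> {j..n}" "B \<noteq> {}" "finite B" if "B \<in> C" for B
    using part_facts[OF part that] finite_subset[of B "{j..n}"] by auto
  have dis: "X \<inter> Y = {}" if "X \<in> C" "Y \<in> C" "X \<noteq> Y" for X Y
    using part_facts(3)[OF part that(1)] that by auto
  have U: "\<Union>C = {j..n}" using partition_onD1[OF part] by simp
  have nn: "0 \<le> \<pi> x" if "x \<in> X" "X \<subseteq> {j..n}" for x X
  proof -
    have "x \<in> {1..n}" using that Suc.prems(1) by auto
    then show ?thesis using pos by (simp add: less_imp_le)
  qed
  show ?case
  proof (cases "k' = 0")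
    case True
    then have "card C = 1" using Suc.prems by simp
    then obtain B where CB: "C = {B}" by (rule card_1_singletonE)
    then have "B = {j..n}" using U by simp
    then show ?thesis using CB True by simp
  next
    case False
    have star: "(\<Sum>B\<in>C'. xlx (pmass \<pi> B)) \<le> (\<Sum>i\<in>{j..<j+Suc k'-1}. xlx (\<pi> i)) + xlx (pmass \<pi> {j+Suc k'-1..n})"
      if part': "partition_on {j..n} C'" and cC': "card C' = Suc k'" and jC': "{j} \<in> C'" for C'
    proof -
      define C'' where "C'' = C' - {{j}}"
      have finC': "finite C'" using finite_elements[OF _ part'] by simp
      have ins: "C' = insert {j} C''" using jC' by (auto simp: C''_def)
      have dj: "disjnt {j} (\<Union>C'')"
        using part_facts(3)[OF part' jC'] by (auto simp: C''_def disjnt_def)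
      have "partition_on ({j..n} - {j}) C''"
        using part' unfolding ins partition_on_insert[OF dj] by simp
      moreover have "{j..n} - {j} = {Suc j..n}" by auto
      ultimately have p'': "partition_on {Suc j..n} C''" by simp
      have c'': "card C'' = k'" using cC' finC' jC' by (simp add: C''_def)
      have IH: "(\<Sum>B\<in>C''. xlx (pmass \<pi> B)) \<le> (\<Sum>i\<in>{Suc j..<Suc j+k'-1}. xlx (\<pi> i)) + xlx (pmass \<pi> {Suc j+k'-1..n})"
        using Suc.IH[OF _ _ _ p'' c''] Suc.prems False by simp
      have "(\<Sum>B\<in>C'. xlx (pmass \<pi> B)) = xlx (\<pi> j) + (\<Sum>B\<in>C''. xlx (pmass \<pi> B))"
        using finC' jC' by (simp add: C''_def sum.remove pmass_def)
      moreover have "(\<Sum>i\<in>{j..<j+Suc k'-1}. xlx (\<pi> i)) = xlx (\<pi> j) + (\<Sum>i\<in>{Suc j..<Suc j+k'-1}. xlx (\<pi> i))"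
        using False by (simp add: sum.atLeast_Suc_lessThan)
      moreover have "Suc j + k' - 1 = j + Suc k' - 1" by simp
      ultimately show ?thesis using IH by simp
    qed
    have "j \<in> \<Union>C" using U Suc.prems by simp
    then obtain B where B: "B \<in> C" "j \<in> B" by auto
    show ?thesis
    proof (cases "B = {j}")
      case True
      then show ?thesis using star[OF part Suc.prems(5)] B by simp
    next
      case Bj: False
      define B' where "B' = B - {j}"
      have B'ne: "B' \<noteq> {}" using Bj B by (auto simp: B'_def)
      have "C \<noteq> {B}" using Suc.prems(5) False by auto
      then obtain D where D: "D \<in> C" "D \<noteq> B" using B by blast
      define R where "R = C - {B, D}"
      have jD: "j \<notin> D" using dis[OF B(1) D(1)] D B by auto
      have finR: "finite R" using finC by (simp add: R_def)
      have C_eq: "C = insert B (insert D R)" using B D by (auto simp: R_def)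
      have BR: "B \<notin> R" "D \<notin> R" "B \<notin> insert D R" using D by (auto simp: R_def)
      define C2 where "C2 = insert {j} (insert (B' \<union> D) R)"
      have jR: "{j} \<notin> R"
      proof
        assume "{j} \<in> R"
        then have "{j} \<in> C" "{j} \<noteq> B" using Bj by (auto simp: R_def)
        then show False using dis[OF _ B(1)] B(2) by auto
      qed
      have BDR: "B' \<union> D \<notin> R"
      proof
        assume "B' \<union> D \<in> R"
        then have "B' \<union> D \<in> C" "B' \<union> D \<noteq> D" by (auto simp: R_def)
        then show False using dis[OF _ D(1)] sub(2)[OF D(1)] by auto
      qed
      have jBD: "{j} \<noteq> B' \<union> D" using jD by (auto simp: B'_def)
      have cardC2: "card C2 = card C"
        unfolding C2_def C_eq using finR jR BDR jBD BR by (simp add: card_insert_if)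
      have RC: "R \<subseteq> C" by (auto simp: R_def)
      have part2: "partition_on {j..n} C2"
      proof (rule partition_onI)
        show "\<Union>C2 = {j..n}"
          using U B(2) unfolding C2_def C_eq by (auto simp: B'_def)
      next
        show "{} \<notin> C2" using sub(2) RC D B'ne unfolding C2_def by auto
      next
        fix p q assume pq: "p \<in> C2" "q \<in> C2" "p \<noteq> q"
        have dR: "X \<inter> Y = {}" if "X \<in> R" "Y \<in> C" "Y \<noteq> X" for X Y
          using dis[OF _ that(2)] that RC by auto
        have BR': "X \<inter> B = {}" "X \<inter> D = {}" if "X \<in> R" for X
          using dR[OF that B(1)] dR[OF that D(1)] that by (auto simp: R_def)
        have B'B: "B' \<subseteq> B" by (auto simp: B'_def)
        have j1: "disjnt {j} (B' \<union> D)" using jD by (auto simp: B'_def disjnt_def)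
        have j2: "disjnt {j} X" if "X \<in> R" for X using BR'(1)[OF that] B(2) by (auto simp: disjnt_def)
        have j3: "disjnt (B' \<union> D) X" if "X \<in> R" for X using BR'[OF that] B'B by (auto simp: disjnt_def)
        have j4: "disjnt X Y" if "X \<in> R" "Y \<in> R" "X \<noteq> Y" for X Y
          using dR[OF that(1)] that RC by (auto simp: disjnt_def)
        show "disjnt p q"
          using pq j1 j2 j3 j4 unfolding C2_def
          by (auto simp: disjnt_sym)
      qed
      have fB': "finite B'" "finite D" "finite B" using sub(3)[OF B(1)] sub(3)[OF D(1)] by (auto simp: B'_def)
      have mB: "pmass \<pi> B = \<pi> j + pmass \<pi> B'"
      proof -
        have "B = {j} \<union> B'" using B by (auto simp: B'_def)
        then show ?thesis using pmass_union[of "{j}" B' \<pi>] fB' by (simp add: B'_def pmass_def)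
      qed
      have mBD: "pmass \<pi> (B' \<union> D) = pmass \<pi> B' + pmass \<pi> D"
        using pmass_union[of B' D \<pi>] fB' dis[OF B(1) D(1)] D by (auto simp: B'_def)
      have pj: "\<pi> j > 0" using pos Suc.prems by auto
      have pB': "pmass \<pi> B' \<ge> 0" unfolding pmass_def
        proof (rule sum_nonneg)
        fix x assume "x \<in> B'"
        then have "x \<in> {1..n}" using sub(1)[OF B(1)] Suc.prems(1) by (auto simp: B'_def)
        then show "0 \<le> \<pi> x" using pos by (simp add: less_imp_le)
      qed
      obtain y where y: "y \<in> D" using sub(2)[OF D(1)] by auto
      have yr: "j \<le> y" "y \<le> n" using sub(1)[OF D(1)] y by auto
      have "\<pi> j \<le> \<pi> y" using ord yr Suc.prems(1) by auto
      also have "\<pi> y \<le> pmass \<pi> D" unfolding pmass_def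
        using nn sub(1)[OF D(1)] y fB' by (intro member_le_sum) auto
      finally have jDle: "\<pi> j \<le> pmass \<pi> D" .
      have ex: "xlx (pmass \<pi> B) + xlx (pmass \<pi> D) \<le> xlx (\<pi> j) + xlx (pmass \<pi> (B' \<union> D))"
        by (rule xlx_exch) (use pj jDle pB' mB mBD in auto)
      have "(\<Sum>X\<in>C. xlx (pmass \<pi> X)) = xlx (pmass \<pi> B) + xlx (pmass \<pi> D) + (\<Sum>X\<in>R. xlx (pmass \<pi> X))"
        unfolding C_eq using finR BR by simp
      also have "\<dots> \<le> xlx (\<pi> j) + xlx (pmass \<pi> (B' \<union> D)) + (\<Sum>X\<in>R. xlx (pmass \<pi> X))"
        using ex by simp
      also have "\<dots> = (\<Sum>X\<in>C2. xlx (pmass \<pi> X))"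
        unfolding C2_def using finR jR BDR jBD by (simp add: pmass_def)
      also have "\<dots> \<le> (\<Sum>i\<in>{j..<j+Suc k'-1}. xlx (\<pi> i)) + xlx (pmass \<pi> {j+Suc k'-1..n})"
        by (rule star[OF part2]) (use cardC2 Suc.prems(5) in \<open>auto simp: C2_def\<close>)
      finally show ?thesis .
    qed
  qed
qed


theorem proposition7p1:
  fixes n k :: nat and \<pi> :: "nat \<Rightarrow> real" and C :: "nat set set"
  assumes pos: "\<forall>x\<in>{1..n}. \<pi> x > 0"
    and sum1: "(\<Sum>x\<in>{1..n}. \<pi> x) = 1"
    and ord: "\<forall>i j. 1 \<le> i \<and> i \<le> j \<and> j \<le> n \<longrightarrow> \<pi> i \<le> \<pi> j"
    and k: "1 \<le> k" "k \<le> n"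
    and part: "partition_on {1..n} C"
    and cardC: "card C = k"
  shows "KL_pi {1..n} \<pi> (gibbs_kernel \<pi> (opt_partition n k)) (Pi_mat \<pi>)
         \<le> KL_pi {1..n} \<pi> (gibbs_kernel \<pi> C) (Pi_mat \<pi>)"
proof -
  let ?O = "opt_partition n k"
  have partO: "partition_on {1..n} ?O"
  proof (rule partition_onI)
    show "\<Union>?O = {1..n}" using k by (auto simp: opt_partition_def)
    show "{} \<notin> ?O" using k by (auto simp: opt_partition_def)
    fix p q assume "p \<in> ?O" "q \<in> ?O" "p \<noteq> q"
    then show "disjnt p q" by (auto simp: opt_partition_def disjnt_def)
  qed
  have nk: "{k..n} \<notin> (\<lambda>i. {i}) ` {1..<k}"
  proof
    assume "{k..n} \<in> (\<lambda>i. {i}) ` {1..<k}"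
    then obtain i where "i < k" "{k..n} = {i}" by auto
    moreover have "k \<in> {k..n}" using k by simp
    ultimately show False by auto
  qed
  have entO: "(\<Sum>B\<in>?O. pmass \<pi> B * ln (pmass \<pi> B))
      = (\<Sum>i\<in>{1..<k}. xlx (\<pi> i)) + xlx (pmass \<pi> {k..n})"
    unfolding opt_partition_def using nk
    by (simp add: sum.reindex xlx_def pmass_def add.commute)
  have M: "(\<Sum>B\<in>C. xlx (pmass \<pi> B)) \<le> (\<Sum>i\<in>{1..<1+k-1}. xlx (\<pi> i)) + xlx (pmass \<pi> {1+k-1..n})"
    by (rule main_ineq[OF pos ord _ k(1) _ part cardC]) (use k in auto)
  show ?thesis
    unfolding KL_gibbs[OF pos partO] KL_gibbs[OF pos part] entO
    using M by (simp add: xlx_def)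
qed

end
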